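(* Let $m\in\mathbb{N}$, $q\in[0.5,1)$, and weights $w_1,\ldots,w_m\ge 0$ with $\sum_j w_j>0$. Let $\mu_1,\ldots,\mu_m,\tilde\epsilon_1,\ldots,\tilde\epsilon_m$ be mutually independent real random variables, where $\tilde\epsilon_1,\ldots,\tilde\epsilon_m$ have finite means and variances and $\mu_1,\ldots,\mu_m$ have one common bounded probability density. For $t>0$ set $\lambda_i^t=t\mu_i+\tilde\epsilon_i$. Let $v$ be the weighted voting game $[q^m;w_1,\ldots,w_m]$ and $\phi(v)$ its Shapley value. Then for $i,j\in\{1,\ldots,m\}$ with $\phi_j(v)>0$, $$\lim_{t\to\infty}\frac{\pi_i(\mathcal{R}^{m,q,t})}{\pi_j(\mathcal{R}^{m,q,t})}=\frac{\phi_i(v)}{\phi_j(v)}.$$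
   Context: The quota is $q^m=q\sum_{j=1}^m w_j$. For a realization of $\lambda_1^t,\ldots,\lambda_m^t$ (ties ignored), let $k{:}m$ be the index of the representative with the $k$-th smallest ideal point and $w_{k:m}$ its weight; the pivotal position is $P=\min\{j:\sum_{k=1}^j w_{k:m}>q^m\}$, and $\pi_i(\mathcal{R}^{m,q,t})=\Pr(P{:}m=i)$ when ideal points are $\lambda^t_1,\ldots,\lambda^t_m$. The weighted voting game $[q^m;w_1,\ldots,w_m]$ is the simple game on $\{1,\ldots,m\}$ with $v(S)=1$ if $\sum_{j\in S}w_j>q^m$ and $v(S)=0$ otherwise. Its Shapley value is $\phi_i(v)=\sum_{S\subseteq\{1,\ldots,m\}\setminus\{i\}}\frac{|S|!(m-|S|-1)!}{m!}[v(S\cup\{i\})-v(S)]$. *)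

theory Defs
  imports "HOL-Probability.Probability"
begin

definition quota :: "nat \<Rightarrow> real \<Rightarrow> (nat \<Rightarrow> real) \<Rightarrow> real" where
  "quota m q w = q * (\<Sum>j=1..m. w j)"

text \<open>For a realization x of the ideal points without ties, representative i is pivotal:
  sigma lists the representatives in increasing order of ideal points (sigma k = k:m),
  P is the least position whose cumulative weight exceeds the quota, and i = P:m.\<close>
definition pivotal :: "nat \<Rightarrow> real \<Rightarrow> (nat \<Rightarrow> real) \<Rightarrow> (nat \<Rightarrow> real) \<Rightarrow> nat \<Rightarrow> bool" where
  "pivotal m q w x i \<longleftrightarrow> inj_on x {1..m} \<and>
     (\<exists>\<sigma>. bij_betw \<sigma> {1..m} {1..m} \<and> strict_mono_on {1..m} (x \<circ> \<sigma>) \<and>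
        \<sigma> (LEAST P. (\<Sum>k=1..P. w (\<sigma> k)) > quota m q w) = i)"

definition pivot_prob ::
  "'a measure \<Rightarrow> nat \<Rightarrow> real \<Rightarrow> (nat \<Rightarrow> real) \<Rightarrow> (nat \<Rightarrow> 'a \<Rightarrow> real) \<Rightarrow> (nat \<Rightarrow> 'a \<Rightarrow> real)
     \<Rightarrow> real \<Rightarrow> nat \<Rightarrow> real" where
  "pivot_prob M m q w \<mu> \<epsilon> t i =
     measure M {\<omega> \<in> space M. pivotal m q w (\<lambda>k. t * \<mu> k \<omega> + \<epsilon> k \<omega>) i}"

definition wvg :: "nat \<Rightarrow> real \<Rightarrow> (nat \<Rightarrow> real) \<Rightarrow> nat set \<Rightarrow> real" where
  "wvg m q w S = (if (\<Sum>j\<in>S. w j) > quota m q w then 1 else 0)"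

definition shapley :: "nat \<Rightarrow> (nat set \<Rightarrow> real) \<Rightarrow> nat \<Rightarrow> real" where
  "shapley m v i = (\<Sum>S\<in>Pow ({1..m} - {i}).
      fact (card S) * fact (m - card S - 1) / fact m * (v (S \<union> {i}) - v S))"

end

theory Submission
  imports Defs
begin


definition rk :: "nat set \<Rightarrow> (nat \<Rightarrow> real) \<Rightarrow> nat \<Rightarrow> nat" where
  "rk N x a = card {b\<in>N. x b < x a}"

lemma rk_less:
  assumes "finite N" "a \<in> N" "b \<in> N" "x a < x b"
  shows "rk N x a < rk N x b"
proof -
  have "{c\<in>N. x c < x a} \<subset> {c\<in>N. x c < x b}" using assms by auto
  then show ?thesis unfolding rk_def using assms(1) by (intro psubset_card_mono) auto
qed

lemma rk_less_iff:
  assumes "finite N" "inj_on x N" "a \<in> N" "b \<in> N"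
  shows "rk N x a < rk N x b \<longleftrightarrow> x a < x b"
proof
  assume h: "rk N x a < rk N x b"
  show "x a < x b"
  proof (rule ccontr)
    assume "\<not> x a < x b"
    moreover have "a \<noteq> b" using h by auto
    have "x a \<noteq> x b" using inj_onD[OF assms(2) _ assms(3) assms(4)] \<open>a \<noteq> b\<close> by blast
    then have "x b < x a" using \<open>\<not> x a < x b\<close> by linarith
    then have "rk N x b < rk N x a" using rk_less assms by blast
    then show False using h by simp
  qed
qed (rule rk_less[OF assms(1,3,4)])

lemma rk_bij:
  assumes "finite N" "inj_on x N"
  shows "bij_betw (rk N x) N {0..<card N}"
proof -
  have inj: "inj_on (rk N x) N"
  proof (rule inj_onI)
    fix a b assume ab: "a \<in> N" "b \<in> N" "rk N x a = rk N x b"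
    show "a = b"
    proof (rule ccontr)
      assume "a \<noteq> b"
      then have "x a \<noteq> x b" using inj_onD[OF assms(2) _ ab(1) ab(2)] by blast
      then have "x a < x b \<or> x b < x a" by auto
      then show False
      proof
        assume "x a < x b" then have "rk N x a < rk N x b" using rk_less[OF assms(1) ab(1) ab(2), where x=x] by blast
        then show False using ab(3) by simp
      next
        assume "x b < x a" then have "rk N x b < rk N x a" using rk_less[OF assms(1) ab(2) ab(1), where x=x] by blast
        then show False using ab(3) by simp
      qed
    qed
  qed
  have sub: "rk N x ` N \<subseteq> {0..<card N}"
  proof
    fix c assume "c \<in> rk N x ` N"
    then obtain a where a: "a \<in> N" "c = rk N x a" by auto
    have "{b\<in>N. x b < x a} \<subset> N" using a by auto
    then have "rk N x a < card N" unfolding rk_def using assms(1) psubset_card_mono by blast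
    then show "c \<in> {0..<card N}" using a by auto
  qed
  have "card (rk N x ` N) = card {0..<card N}" using card_image[OF inj] by simp
  then have "rk N x ` N = {0..<card N}" using sub by (intro card_subset_eq) auto
  then show ?thesis using inj unfolding bij_betw_def by auto
qed


lemma inj_on_iff_lt:
  fixes x :: "nat \<Rightarrow> real"
  shows "inj_on x N \<longleftrightarrow> (\<forall>a\<in>N. \<forall>b\<in>N. a \<noteq> b \<longrightarrow> x a < x b \<or> x b < x a)"
  unfolding inj_on_def by (metis linorder_neqE_linordered_idom less_irrefl)

lemma pivotal_cong:
  assumes h: "\<forall>a\<in>{1..m}. \<forall>b\<in>{1..m}. (x a < x b \<longleftrightarrow> y a < y b)"
  shows "pivotal m q w x i \<longleftrightarrow> pivotal m q w y i"
proof -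
  let ?N = "{1..m}"
  have inj: "inj_on x ?N \<longleftrightarrow> inj_on y ?N" unfolding inj_on_iff_lt using h by blast
  have sm: "strict_mono_on ?N (x \<circ> \<sigma>) \<longleftrightarrow> strict_mono_on ?N (y \<circ> \<sigma>)" if b: "bij_betw \<sigma> ?N ?N" for \<sigma>
  proof -
    have sN: "\<forall>r\<in>?N. \<sigma> r \<in> ?N" using bij_betw_apply[OF b] by blast
    have "strict_mono_on ?N (x \<circ> \<sigma>) \<longleftrightarrow> (\<forall>r\<in>?N. \<forall>s\<in>?N. r < s \<longrightarrow> x (\<sigma> r) < x (\<sigma> s))"
      unfolding strict_mono_on_def by auto
    also have "\<dots> \<longleftrightarrow> (\<forall>r\<in>?N. \<forall>s\<in>?N. r < s \<longrightarrow> y (\<sigma> r) < y (\<sigma> s))"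
      using h sN by (intro ball_cong refl imp_cong) blast+
    also have "\<dots> \<longleftrightarrow> strict_mono_on ?N (y \<circ> \<sigma>)"
      unfolding strict_mono_on_def by auto
    finally show ?thesis .
  qed
  show ?thesis unfolding pivotal_def using inj sm by blast
qed

lemma pivotal_char:
  fixes m :: nat and q :: real and w :: "nat \<Rightarrow> real" and x :: "nat \<Rightarrow> real"
  assumes wpos: "\<And>k. k \<in> {1..m} \<Longrightarrow> 0 \<le> w k"
    and Q0: "0 \<le> quota m q w" and Q1: "quota m q w < sum w {1..m}"
  shows "pivotal m q w x i \<longleftrightarrow> inj_on x {1..m} \<and> i \<in> {1..m} \<and>
     sum w {b\<in>{1..m}. x b < x i} \<le> quota m q w \<and> quota m q w < sum w {b\<in>{1..m}. x b < x i} + w i"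
proof
  let ?N = "{1..m}" and ?Q = "quota m q w"
  assume "pivotal m q w x i"
  then obtain \<sigma> where injx: "inj_on x ?N" and bij: "bij_betw \<sigma> ?N ?N"
    and sm: "strict_mono_on ?N (x \<circ> \<sigma>)"
    and si: "\<sigma> (LEAST P. (\<Sum>k=1..P. w (\<sigma> k)) > ?Q) = i"
    unfolding pivotal_def by blast
  define P where "P = (LEAST P. (\<Sum>k=1..P. w (\<sigma> k)) > ?Q)"
  have si': "\<sigma> P = i" using si unfolding P_def .
  have tot: "(\<Sum>k=1..m. w (\<sigma> k)) = sum w ?N" using sum.reindex_bij_betw[OF bij] .
  have ex: "?Q < (\<Sum>k=1..m. w (\<sigma> k))" using tot Q1 by simp
  have PQ: "?Q < (\<Sum>k=1..P. w (\<sigma> k))" unfolding P_def by (rule LeastI[of _ m]) (rule ex)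
  have Pm: "P \<le> m" unfolding P_def by (rule Least_le) (rule ex)
  have P1: "1 \<le> P"
  proof (rule ccontr)
    assume "\<not> 1 \<le> P" then have "P = 0" by simp
    then show False using PQ Q0 by simp
  qed
  have PN: "P \<in> ?N" using Pm P1 by simp
  have iN: "i \<in> ?N" using si' PN bij_betw_apply[OF bij] by blast
  have pre: "{b\<in>?N. x b < x i} = \<sigma> ` {1..<P}"
  proof
    show "{b\<in>?N. x b < x i} \<subseteq> \<sigma> ` {1..<P}"
    proof
      fix b assume b: "b \<in> {b\<in>?N. x b < x i}"
      have "b \<in> \<sigma> ` ?N" using b bij unfolding bij_betw_def by simp
      then obtain k where k: "k \<in> ?N" "b = \<sigma> k" by blast
      have "x (\<sigma> k) < x (\<sigma> P)" using b k si' by simp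
      then have "k < P" using strict_mono_on_less[OF sm k(1) PN] by simp
      then show "b \<in> \<sigma> ` {1..<P}" using k by auto
    qed
  next
    show "\<sigma> ` {1..<P} \<subseteq> {b\<in>?N. x b < x i}"
    proof
      fix b assume "b \<in> \<sigma> ` {1..<P}"
      then obtain k where k: "k \<in> {1..<P}" "b = \<sigma> k" by auto
      have kN: "k \<in> ?N" using k Pm by auto
      have "x (\<sigma> k) < x (\<sigma> P)" using strict_mono_on_less[OF sm kN PN] k by simp
      moreover have "\<sigma> k \<in> ?N" using kN bij_betw_apply[OF bij] by blast
      ultimately show "b \<in> {b\<in>?N. x b < x i}" using k si' by simp
    qed
  qed
  have injs: "inj_on \<sigma> {1..<P}"
    using bij Pm unfolding bij_betw_def by (rule_tac inj_on_subset[of \<sigma> ?N]) auto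
  have s1: "sum w {b\<in>?N. x b < x i} = (\<Sum>k\<in>{1..<P}. w (\<sigma> k))"
    using pre sum.reindex[OF injs, of w] by simp
  have "P - 1 < P" using P1 by simp
  then have "\<not> ?Q < (\<Sum>k=1..P-1. w (\<sigma> k))" unfolding P_def by (rule not_less_Least)
  moreover have "{1..P-1} = {1..<P}" using P1 by auto
  ultimately have A: "sum w {b\<in>?N. x b < x i} \<le> ?Q" using s1 by simp
  have "{1..P} = insert P {1..<P}" using P1 by auto
  then have "(\<Sum>k=1..P. w (\<sigma> k)) = (\<Sum>k\<in>{1..<P}. w (\<sigma> k)) + w (\<sigma> P)" by simp
  then have B: "?Q < sum w {b\<in>?N. x b < x i} + w i" using PQ s1 si' by simp
  show "inj_on x ?N \<and> i \<in> ?N \<and> sum w {b\<in>?N. x b < x i} \<le> ?Q \<and> ?Q < sum w {b\<in>?N. x b < x i} + w i"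
    using injx iN A B by blast
next
  let ?N = "{1..m}" and ?Q = "quota m q w"
  assume h: "inj_on x ?N \<and> i \<in> ?N \<and> sum w {b\<in>?N. x b < x i} \<le> ?Q \<and> ?Q < sum w {b\<in>?N. x b < x i} + w i"
  then have injx: "inj_on x ?N" and iN: "i \<in> ?N" and A: "sum w {b\<in>?N. x b < x i} \<le> ?Q"
    and B: "?Q < sum w {b\<in>?N. x b < x i} + w i" by auto
  define \<rho> where "\<rho> = Suc \<circ> rk ?N x"
  have bijr: "bij_betw (rk ?N x) ?N {0..<m}" using rk_bij[of ?N x] injx by simp
  have "Suc ` {0..<m} = {1..m}" by (simp add: image_Suc_atLeastLessThan atLeastLessThanSuc_atLeastAtMost)
  then have "bij_betw Suc {0..<m} ?N" unfolding bij_betw_def by simp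
  then have bijp: "bij_betw \<rho> ?N ?N" unfolding \<rho>_def by (rule bij_betw_trans[OF bijr])
  define \<sigma> where "\<sigma> = the_inv_into ?N \<rho>"
  have bij: "bij_betw \<sigma> ?N ?N" unfolding \<sigma>_def by (rule bij_betw_the_inv_into[OF bijp])
  have ps: "\<rho> (\<sigma> k) = k" if "k \<in> ?N" for k
    unfolding \<sigma>_def using f_the_inv_into_f_bij_betw[OF bijp] that by blast
  have sp: "\<sigma> (\<rho> a) = a" if "a \<in> ?N" for a
    unfolding \<sigma>_def using the_inv_into_f_f[OF bij_betw_imp_inj_on[OF bijp] that] .
  have sN: "\<sigma> k \<in> ?N" if "k \<in> ?N" for k using bij_betw_apply[OF bij that] .
  have piff: "\<rho> a < \<rho> b \<longleftrightarrow> x a < x b" if "a \<in> ?N" "b \<in> ?N" for a b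
    using rk_less_iff[of ?N x a b] injx that unfolding \<rho>_def by simp
  have sm: "strict_mono_on ?N (x \<circ> \<sigma>)"
  proof (rule strict_mono_onI)
    fix r s assume rs: "r \<in> ?N" "s \<in> ?N" "r < s"
    then have "\<rho> (\<sigma> r) < \<rho> (\<sigma> s)" using ps by simp
    then show "(x \<circ> \<sigma>) r < (x \<circ> \<sigma>) s" using piff[OF sN[OF rs(1)] sN[OF rs(2)]] by simp
  qed
  define r where "r = rk ?N x i"
  have rm: "r < m" using bij_betw_apply[OF bijr iN] unfolding r_def by simp
  have pi: "\<rho> i = Suc r" unfolding \<rho>_def r_def by simp
  have pre: "{b\<in>?N. x b < x i} = \<sigma> ` {1..r}"
  proof
    show "{b\<in>?N. x b < x i} \<subseteq> \<sigma> ` {1..r}"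
    proof
      fix b assume b: "b \<in> {b\<in>?N. x b < x i}"
      then have "\<rho> b < \<rho> i" using piff iN by simp
      moreover have "\<rho> b \<in> ?N" using bij_betw_apply[OF bijp] b by blast
      ultimately have "\<rho> b \<in> {1..r}" using pi by auto
      moreover have "b = \<sigma> (\<rho> b)" using sp b by simp
      ultimately show "b \<in> \<sigma> ` {1..r}" by blast
    qed
  next
    show "\<sigma> ` {1..r} \<subseteq> {b\<in>?N. x b < x i}"
    proof
      fix b assume "b \<in> \<sigma> ` {1..r}"
      then obtain k where k: "k \<in> {1..r}" "b = \<sigma> k" by auto
      have kN: "k \<in> ?N" using k rm by auto
      have "\<rho> (\<sigma> k) < \<rho> i" using ps[OF kN] pi k by simp
      then have "x (\<sigma> k) < x i" using piff[OF sN[OF kN] iN] by simp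
      then show "b \<in> {b\<in>?N. x b < x i}" using k sN[OF kN] by simp
    qed
  qed
  have injs: "inj_on \<sigma> {1..r}"
    by (rule inj_on_subset[OF bij_betw_imp_inj_on[OF bij]]) (use rm in auto)
  have s1: "sum w {b\<in>?N. x b < x i} = (\<Sum>k=1..r. w (\<sigma> k))"
    using pre sum.reindex[OF injs, of w] by simp
  have L: "(LEAST P. (\<Sum>k=1..P. w (\<sigma> k)) > ?Q) = \<rho> i"
  proof (rule Least_equality)
    have "(\<Sum>k=1..\<rho> i. w (\<sigma> k)) = (\<Sum>k=1..r. w (\<sigma> k)) + w (\<sigma> (\<rho> i))"
      using pi by simp
    then show "(\<Sum>k=1..\<rho> i. w (\<sigma> k)) > ?Q" using B s1 sp[OF iN] by simp
  next
    fix y assume y: "(\<Sum>k=1..y. w (\<sigma> k)) > ?Q"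
    show "\<rho> i \<le> y"
    proof (rule ccontr)
      assume "\<not> \<rho> i \<le> y"
      then have yr: "y \<le> r" using pi by simp
      have "(\<Sum>k=1..y. w (\<sigma> k)) \<le> (\<Sum>k=1..r. w (\<sigma> k))"
      proof (rule sum_mono2)
        show "{1..y} \<subseteq> {1..r}" using yr by auto
        show "0 \<le> w (\<sigma> k)" if "k \<in> {1..r} - {1..y}" for k
          using that rm sN wpos by auto
      qed simp
      then show False using y A s1 by simp
    qed
  qed
  show "pivotal m q w x i" unfolding pivotal_def
    using injx bij sm L sp[OF iN] by auto
qed



lemma comp_meas[measurable (raw)]: "(\<lambda>x. x b) \<in> borel_measurable (\<Pi>\<^sub>M k\<in>N. (borel::real measure))"
proof (cases "b \<in> N")
  case True then show ?thesis by (rule measurable_component_singleton)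
next
  case False
  have "(\<lambda>x. undefined::real) \<in> borel_measurable (\<Pi>\<^sub>M k\<in>N. (borel::real measure))" by simp
  then show ?thesis
    by (rule measurable_cong[THEN iffD1, rotated]) (use False in \<open>auto simp: space_PiM PiE_def extensional_def\<close>)
qed

lemma (in prob_space) indep_vars_reindex:
  assumes ind: "indep_vars M' X I" and g: "inj_on g J" "g ` J \<subseteq> I"
  shows "indep_vars (\<lambda>j. M' (g j)) (\<lambda>j. X (g j)) J"
proof -
  let ?F = "\<lambda>i. {X i -` A \<inter> space M | A. A \<in> sets (M' i)}"
  have rv: "\<forall>i\<in>I. random_variable (M' i) (X i)" and isets: "indep_sets ?F I"
    using ind unfolding indep_vars_def2 by auto
  have ev: "\<forall>i\<in>I. ?F i \<subseteq> events"
    and pr: "\<And>K A. K \<subseteq> I \<Longrightarrow> K \<noteq> {} \<Longrightarrow> finite K \<Longrightarrow> A \<in> Pi K ?F \<Longrightarrow>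
       prob (\<Inter>j\<in>K. A j) = (\<Prod>j\<in>K. prob (A j))"
    using isets unfolding indep_sets_def by auto
  have "indep_sets (\<lambda>j. ?F (g j)) J"
    unfolding indep_sets_def
  proof (intro conjI ballI allI impI)
    fix j assume "j \<in> J" then show "?F (g j) \<subseteq> events" using ev g by auto
  next
    fix K A assume K: "K \<subseteq> J" "K \<noteq> {}" "finite K" and A: "A \<in> Pi K (\<lambda>j. ?F (g j))"
    define B where "B = (\<lambda>i. A (the_inv_into K g i))"
    have injK: "inj_on g K" using g(1) K(1) by (rule inj_on_subset)
    have Bg: "B (g k) = A k" if "k \<in> K" for k
      unfolding B_def using the_inv_into_f_f[OF injK that] by simp
    have "B \<in> Pi (g ` K) ?F"
    proof
      fix i assume "i \<in> g ` K"
      then obtain k where k: "k \<in> K" "i = g k" by auto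
      then show "B i \<in> ?F i" using A Bg[OF k(1)] by auto
    qed
    then have "prob (\<Inter>i\<in>g ` K. B i) = (\<Prod>i\<in>g ` K. prob (B i))"
    proof (rule pr[rotated 3])
      show "g ` K \<subseteq> I" using K(1) g(2) by blast
    qed (use K in auto)
    moreover have "(\<Inter>i\<in>g ` K. B i) = (\<Inter>k\<in>K. A k)" using Bg by auto
    moreover have "(\<Prod>i\<in>g ` K. prob (B i)) = (\<Prod>k\<in>K. prob (A k))"
      using prod.reindex[OF injK, of "\<lambda>i. prob (B i)"] Bg by simp
    ultimately show "prob (\<Inter>j\<in>K. A j) = (\<Prod>j\<in>K. prob (A j))" by simp
  qed
  then show ?thesis unfolding indep_vars_def2 using rv g by auto
qed

lemma (in prob_space) law_iid:
  fixes Y :: "nat \<Rightarrow> 'a \<Rightarrow> real"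
  assumes N: "N \<noteq> {}" and ind: "indep_vars (\<lambda>_. borel) Y N"
    and d: "\<And>k. k \<in> N \<Longrightarrow> distributed M lborel (Y k) f"
  shows "distr M (\<Pi>\<^sub>M k\<in>N. borel) (\<lambda>\<omega>. \<lambda>k\<in>N. Y k \<omega>) = (\<Pi>\<^sub>M k\<in>N. density lborel f)"
proof -
  have rv: "random_variable borel (Y k)" if "k \<in> N" for k
    using distributed_measurable[OF d[OF that]] by simp
  have "distr M (\<Pi>\<^sub>M k\<in>N. borel) (\<lambda>\<omega>. \<lambda>k\<in>N. Y k \<omega>) = (\<Pi>\<^sub>M k\<in>N. distr M borel (Y k))"
    using indep_vars_iff_distr_eq_PiM'[of N Y "\<lambda>_. borel", OF N rv] ind by simp
  also have "\<dots> = (\<Pi>\<^sub>M k\<in>N. density lborel f)"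
  proof (rule PiM_cong[OF refl])
    fix k assume k: "k \<in> N"
    have "distr M borel (Y k) = distr M lborel (Y k)" by (rule distr_cong) auto
    then show "distr M borel (Y k) = density lborel f"
      using distributed_distr_eq_density[OF d[OF k]] by simp
  qed
  finally show ?thesis .
qed

definition Ev :: "nat set \<Rightarrow> nat \<Rightarrow> nat set \<Rightarrow> (nat \<Rightarrow> real) \<Rightarrow> bool" where
  "Ev N a S x \<longleftrightarrow> (\<forall>c\<in>N. \<forall>d\<in>N. c \<noteq> d \<longrightarrow> x c < x d \<or> x d < x c) \<and> (\<forall>b\<in>N. x b < x a \<longleftrightarrow> b \<in> S)"

definition Rk :: "nat set \<Rightarrow> nat \<Rightarrow> nat \<Rightarrow> (nat \<Rightarrow> real) \<Rightarrow> bool" where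
  "Rk N a s x \<longleftrightarrow> (\<forall>c\<in>N. \<forall>d\<in>N. c \<noteq> d \<longrightarrow> x c < x d \<or> x d < x c) \<and> (\<exists>S\<in>Pow N. card S = s \<and> (\<forall>b\<in>N. x b < x a \<longleftrightarrow> b \<in> S))"

lemma Ev_meas: "Measurable.pred (\<Pi>\<^sub>M k\<in>N. borel) (Ev N a S)"
  unfolding Ev_def by measurable

lemma Rk_meas:
  assumes fN: "finite N"
  shows "Measurable.pred (\<Pi>\<^sub>M k\<in>N. borel) (Rk N a s)"
proof -
  let ?P = "\<Pi>\<^sub>M k\<in>N. (borel::real measure)"
  have "{x\<in>space ?P. Rk N a s x} = (\<Union>S\<in>{S\<in>Pow N. card S = s}. {x\<in>space ?P. Ev N a S x})"
    unfolding Rk_def Ev_def by auto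
  moreover have "(\<Union>S\<in>{S\<in>Pow N. card S = s}. {x\<in>space ?P. Ev N a S x}) \<in> sets ?P"
  proof (rule sets.finite_UN)
    show "finite {S\<in>Pow N. card S = s}" using fN by simp
    show "{x\<in>space ?P. Ev N a S x} \<in> sets ?P" for S using Ev_meas[of N a S] unfolding pred_def by simp
  qed
  ultimately show ?thesis unfolding pred_def by simp
qed


lemma Ev_restrict: "a \<in> N \<Longrightarrow> Ev N a S (\<lambda>k\<in>N. x k) \<longleftrightarrow> Ev N a S x"
  unfolding Ev_def by simp

lemma Ev_comp:
  assumes pi: "bij_betw \<pi> N N" and a: "a \<in> N" and S: "S \<subseteq> N"
  shows "Ev N a S (\<lambda>k\<in>N. x (\<pi> k)) \<longleftrightarrow> Ev N (\<pi> a) (\<pi> ` S) x"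
proof -
  have pN: "\<And>c. c \<in> N \<Longrightarrow> \<pi> c \<in> N" using bij_betw_apply[OF pi] by blast
  have sur: "\<And>c. c \<in> N \<Longrightarrow> \<exists>b\<in>N. c = \<pi> b" using pi unfolding bij_betw_def by auto
  have inj: "\<And>b c. b \<in> N \<Longrightarrow> c \<in> N \<Longrightarrow> \<pi> b = \<pi> c \<Longrightarrow> b = c"
    using bij_betw_imp_inj_on[OF pi] unfolding inj_on_def by blast
  have 1: "(\<forall>c\<in>N. \<forall>d\<in>N. c \<noteq> d \<longrightarrow> x (\<pi> c) < x (\<pi> d) \<or> x (\<pi> d) < x (\<pi> c)) \<longleftrightarrow>
      (\<forall>c\<in>N. \<forall>d\<in>N. c \<noteq> d \<longrightarrow> x c < x d \<or> x d < x c)"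
  proof
    assume h: "\<forall>c\<in>N. \<forall>d\<in>N. c \<noteq> d \<longrightarrow> x (\<pi> c) < x (\<pi> d) \<or> x (\<pi> d) < x (\<pi> c)"
    show "\<forall>c\<in>N. \<forall>d\<in>N. c \<noteq> d \<longrightarrow> x c < x d \<or> x d < x c"
    proof (intro ballI impI)
      fix c d assume cd: "c \<in> N" "d \<in> N" "c \<noteq> d"
      obtain c' where c': "c' \<in> N" "c = \<pi> c'" using sur[OF cd(1)] by blast
      obtain d' where d': "d' \<in> N" "d = \<pi> d'" using sur[OF cd(2)] by blast
      have "c' \<noteq> d'" using c' d' cd(3) by blast
      then show "x c < x d \<or> x d < x c" using h c' d' by blast
    qed
  next
    assume h: "\<forall>c\<in>N. \<forall>d\<in>N. c \<noteq> d \<longrightarrow> x c < x d \<or> x d < x c"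
    show "\<forall>c\<in>N. \<forall>d\<in>N. c \<noteq> d \<longrightarrow> x (\<pi> c) < x (\<pi> d) \<or> x (\<pi> d) < x (\<pi> c)"
    proof (intro ballI impI)
      fix c d assume cd: "c \<in> N" "d \<in> N" "c \<noteq> d"
      then have "\<pi> c \<noteq> \<pi> d" using inj by blast
      then show "x (\<pi> c) < x (\<pi> d) \<or> x (\<pi> d) < x (\<pi> c)" using h pN cd by blast
    qed
  qed
  have 2: "(\<forall>b\<in>N. x (\<pi> b) < x (\<pi> a) \<longleftrightarrow> b \<in> S) \<longleftrightarrow> (\<forall>c\<in>N. x c < x (\<pi> a) \<longleftrightarrow> c \<in> \<pi> ` S)"
  proof
    assume h: "\<forall>b\<in>N. x (\<pi> b) < x (\<pi> a) \<longleftrightarrow> b \<in> S"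
    show "\<forall>c\<in>N. x c < x (\<pi> a) \<longleftrightarrow> c \<in> \<pi> ` S"
    proof
      fix c assume c: "c \<in> N"
      obtain b where b: "b \<in> N" "c = \<pi> b" using sur[OF c] by blast
      have "c \<in> \<pi> ` S \<longleftrightarrow> b \<in> S"
      proof
        assume "c \<in> \<pi> ` S"
        then obtain b' where "b' \<in> S" "c = \<pi> b'" by blast
        then have "b' = b" using inj[of b' b] S b by blast
        then show "b \<in> S" using \<open>b' \<in> S\<close> by simp
      qed (use b in simp)
      moreover have "x (\<pi> b) < x (\<pi> a) \<longleftrightarrow> b \<in> S" using h b(1) by (rule bspec)
      ultimately show "x c < x (\<pi> a) \<longleftrightarrow> c \<in> \<pi> ` S" using b(2) by simp
    qed
  next
    assume h: "\<forall>c\<in>N. x c < x (\<pi> a) \<longleftrightarrow> c \<in> \<pi> ` S"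
    show "\<forall>b\<in>N. x (\<pi> b) < x (\<pi> a) \<longleftrightarrow> b \<in> S"
    proof
      fix b assume b: "b \<in> N"
      have "\<pi> b \<in> \<pi> ` S \<longleftrightarrow> b \<in> S"
      proof
        assume "\<pi> b \<in> \<pi> ` S"
        then obtain b' where "b' \<in> S" "\<pi> b = \<pi> b'" by blast
        then have "b' = b" using inj[of b' b] S b by auto
        then show "b \<in> S" using \<open>b' \<in> S\<close> by simp
      qed simp
      moreover have "x (\<pi> b) < x (\<pi> a) \<longleftrightarrow> \<pi> b \<in> \<pi> ` S" using h pN[OF b] by (rule bspec)
      ultimately show "x (\<pi> b) < x (\<pi> a) \<longleftrightarrow> b \<in> S" by simp
    qed
  qed
  have R: "Ev N a S (\<lambda>k\<in>N. x (\<pi> k)) \<longleftrightarrow> Ev N a S (\<lambda>k. x (\<pi> k))"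
    using Ev_restrict[OF a, of S "\<lambda>k. x (\<pi> k)"] by simp
  have "Ev N a S (\<lambda>k. x (\<pi> k)) \<longleftrightarrow> Ev N (\<pi> a) (\<pi> ` S) x"
    unfolding Ev_def using 1 2 by (simp only:)
  then show ?thesis using R by simp
qed

lemma Rk_alt:
  "Rk N a s x \<longleftrightarrow> (\<forall>c\<in>N. \<forall>d\<in>N. c \<noteq> d \<longrightarrow> x c < x d \<or> x d < x c) \<and> card {b\<in>N. x b < x a} = s"
proof -
  have "(\<exists>S\<in>Pow N. card S = s \<and> (\<forall>b\<in>N. x b < x a \<longleftrightarrow> b \<in> S)) \<longleftrightarrow> card {b\<in>N. x b < x a} = s"
  proof
    assume "\<exists>S\<in>Pow N. card S = s \<and> (\<forall>b\<in>N. x b < x a \<longleftrightarrow> b \<in> S)"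
    then obtain S where "S \<subseteq> N" "card S = s" "\<forall>b\<in>N. x b < x a \<longleftrightarrow> b \<in> S" by auto
    then have "{b\<in>N. x b < x a} = S" by auto
    then show "card {b\<in>N. x b < x a} = s" using \<open>card S = s\<close> by simp
  next
    assume "card {b\<in>N. x b < x a} = s"
    then show "\<exists>S\<in>Pow N. card S = s \<and> (\<forall>b\<in>N. x b < x a \<longleftrightarrow> b \<in> S)"
      by (intro bexI[of _ "{b\<in>N. x b < x a}"]) auto
  qed
  then show ?thesis unfolding Rk_def by simp
qed

lemma Rk_restrict: "a \<in> N \<Longrightarrow> Rk N a s (\<lambda>k\<in>N. x k) \<longleftrightarrow> Rk N a s x"
  unfolding Rk_def by simp

lemma Rk_comp:
  assumes pi: "bij_betw \<pi> N N" and a: "a \<in> N"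
  shows "Rk N a s (\<lambda>k\<in>N. x (\<pi> k)) \<longleftrightarrow> Rk N (\<pi> a) s x"
proof -
  have R: "Rk N a s (\<lambda>k\<in>N. x (\<pi> k)) \<longleftrightarrow> Rk N a s (\<lambda>k. x (\<pi> k))"
    using Rk_restrict[OF a, of s "\<lambda>k. x (\<pi> k)"] by simp
  have pN: "\<And>c. c \<in> N \<Longrightarrow> \<pi> c \<in> N" using bij_betw_apply[OF pi] by blast
  have injN: "inj_on \<pi> N" using pi by (rule bij_betw_imp_inj_on)
  have sur: "\<And>c. c \<in> N \<Longrightarrow> \<exists>b\<in>N. c = \<pi> b" using pi unfolding bij_betw_def by auto
  have img: "\<pi> ` {b\<in>N. x (\<pi> b) < x (\<pi> a)} = {c\<in>N. x c < x (\<pi> a)}"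
  proof
    show "\<pi> ` {b\<in>N. x (\<pi> b) < x (\<pi> a)} \<subseteq> {c\<in>N. x c < x (\<pi> a)}" using pN by auto
    show "{c\<in>N. x c < x (\<pi> a)} \<subseteq> \<pi> ` {b\<in>N. x (\<pi> b) < x (\<pi> a)}"
    proof
      fix c assume c: "c \<in> {c\<in>N. x c < x (\<pi> a)}"
      then obtain b where b: "b \<in> N" "c = \<pi> b" using sur by blast
      then show "c \<in> \<pi> ` {b\<in>N. x (\<pi> b) < x (\<pi> a)}" using c by auto
    qed
  qed
  have C: "card {b\<in>N. x (\<pi> b) < x (\<pi> a)} = card {c\<in>N. x c < x (\<pi> a)}"
    using card_image[OF inj_on_subset[OF injN, of "{b\<in>N. x (\<pi> b) < x (\<pi> a)}"]] img by auto
  have A: "(\<forall>c\<in>N. \<forall>d\<in>N. c \<noteq> d \<longrightarrow> x (\<pi> c) < x (\<pi> d) \<or> x (\<pi> d) < x (\<pi> c)) \<longleftrightarrow>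
    (\<forall>c\<in>N. \<forall>d\<in>N. c \<noteq> d \<longrightarrow> x c < x d \<or> x d < x c)"
  proof
    assume h: "\<forall>c\<in>N. \<forall>d\<in>N. c \<noteq> d \<longrightarrow> x (\<pi> c) < x (\<pi> d) \<or> x (\<pi> d) < x (\<pi> c)"
    show "\<forall>c\<in>N. \<forall>d\<in>N. c \<noteq> d \<longrightarrow> x c < x d \<or> x d < x c"
    proof (intro ballI impI)
      fix c d assume cd: "c \<in> N" "d \<in> N" "c \<noteq> d"
      obtain c' where c': "c' \<in> N" "c = \<pi> c'" using sur[OF cd(1)] by blast
      obtain d' where d': "d' \<in> N" "d = \<pi> d'" using sur[OF cd(2)] by blast
      have "c' \<noteq> d'" using c' d' cd(3) by blast
      then show "x c < x d \<or> x d < x c" using h c' d' by blast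
    qed
  next
    assume h: "\<forall>c\<in>N. \<forall>d\<in>N. c \<noteq> d \<longrightarrow> x c < x d \<or> x d < x c"
    show "\<forall>c\<in>N. \<forall>d\<in>N. c \<noteq> d \<longrightarrow> x (\<pi> c) < x (\<pi> d) \<or> x (\<pi> d) < x (\<pi> c)"
    proof (intro ballI impI)
      fix c d assume cd: "c \<in> N" "d \<in> N" "c \<noteq> d"
      then have "\<pi> c \<noteq> \<pi> d" using injN unfolding inj_on_def by blast
      then show "x (\<pi> c) < x (\<pi> d) \<or> x (\<pi> d) < x (\<pi> c)" using h pN cd by blast
    qed
  qed
  have "Rk N a s (\<lambda>k\<in>N. x (\<pi> k)) \<longleftrightarrow> ((\<forall>c\<in>N. \<forall>d\<in>N. c \<noteq> d \<longrightarrow> x (\<pi> c) < x (\<pi> d) \<or> x (\<pi> d) < x (\<pi> c)) \<and> card {b\<in>N. x (\<pi> b) < x (\<pi> a)} = s)"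
    using R Rk_alt[of N a s "\<lambda>k. x (\<pi> k)"] by blast
  also have "\<dots> \<longleftrightarrow> ((\<forall>c\<in>N. \<forall>d\<in>N. c \<noteq> d \<longrightarrow> x c < x d \<or> x d < x c) \<and> card {c\<in>N. x c < x (\<pi> a)} = s)"
    by (simp only: A C)
  also have "\<dots> \<longleftrightarrow> Rk N (\<pi> a) s x" using Rk_alt[of N "\<pi> a" s x] by blast
  finally show ?thesis .
qed



abbreviation PB :: "nat set \<Rightarrow> (nat \<Rightarrow> real) measure" where
  "PB N \<equiv> \<Pi>\<^sub>M k\<in>N. borel"

definition Inj :: "nat set \<Rightarrow> (nat \<Rightarrow> real) \<Rightarrow> bool" where
  "Inj N x \<longleftrightarrow> (\<forall>c\<in>N. \<forall>d\<in>N. c \<noteq> d \<longrightarrow> x c < x d \<or> x d < x c)"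

lemma Inj_meas: "Measurable.pred (PB N) (Inj N)"
  unfolding Inj_def by measurable

locale iid = prob_space M for M :: "'a measure" +
  fixes N :: "nat set" and \<mu> :: "nat \<Rightarrow> 'a \<Rightarrow> real" and f :: "real \<Rightarrow> ennreal"
  assumes fin: "finite N" and ne: "N \<noteq> {}"
    and ind: "indep_vars (\<lambda>_. borel) \<mu> N"
    and dis: "\<And>k. k \<in> N \<Longrightarrow> distributed M lborel (\<mu> k) f"
begin

lemma meas: "k \<in> N \<Longrightarrow> \<mu> k \<in> borel_measurable M"
  using distributed_measurable[OF dis] by simp

definition X :: "'a \<Rightarrow> nat \<Rightarrow> real" where "X = (\<lambda>\<omega>. \<lambda>k\<in>N. \<mu> k \<omega>)"

lemma X_meas: "X \<in> measurable M (PB N)"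
  unfolding X_def by (rule measurable_restrict) (rule meas)

lemma X_app: "k \<in> N \<Longrightarrow> X \<omega> k = \<mu> k \<omega>"
  unfolding X_def by simp

lemma prob_pred:
  assumes Y: "Y \<in> measurable M (PB N)" and \<Phi>: "Measurable.pred (PB N) \<Phi>"
  shows "prob {\<omega>\<in>space M. \<Phi> (Y \<omega>)} = measure (distr M (PB N) Y) {x\<in>space (PB N). \<Phi> x}"
    and "{\<omega>\<in>space M. \<Phi> (Y \<omega>)} \<in> events"
proof -
  have A: "{x\<in>space (PB N). \<Phi> x} \<in> sets (PB N)" using \<Phi> unfolding pred_def .
  have e: "Y -` {x\<in>space (PB N). \<Phi> x} \<inter> space M = {\<omega>\<in>space M. \<Phi> (Y \<omega>)}"
    using measurable_space[OF Y] by auto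
  then show "prob {\<omega>\<in>space M. \<Phi> (Y \<omega>)} = measure (distr M (PB N) Y) {x\<in>space (PB N). \<Phi> x}"
    using measure_distr[OF Y A] by simp
  show "{\<omega>\<in>space M. \<Phi> (Y \<omega>)} \<in> events" using measurable_sets[OF Y A] e by simp
qed

lemma invariance:
  assumes pi: "bij_betw \<pi> N N" and \<Phi>: "Measurable.pred (PB N) \<Phi>"
  shows "prob {\<omega>\<in>space M. \<Phi> (\<lambda>k\<in>N. \<mu> (\<pi> k) \<omega>)} = prob {\<omega>\<in>space M. \<Phi> (X \<omega>)}"
proof -
  have pN: "\<And>k. k \<in> N \<Longrightarrow> \<pi> k \<in> N" using bij_betw_apply[OF pi] by blast
  have sub: "\<pi> ` N \<subseteq> N" using pN by auto
  have ind2: "indep_vars (\<lambda>_. borel) (\<lambda>k. \<mu> (\<pi> k)) N"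
    using indep_vars_reindex[OF ind bij_betw_imp_inj_on[OF pi] sub] by simp
  have Y: "(\<lambda>\<omega>. \<lambda>k\<in>N. \<mu> (\<pi> k) \<omega>) \<in> measurable M (PB N)"
    by (rule measurable_restrict) (rule meas[OF pN])
  have law1: "distr M (PB N) (\<lambda>\<omega>. \<lambda>k\<in>N. \<mu> (\<pi> k) \<omega>) = (\<Pi>\<^sub>M k\<in>N. density lborel f)"
    by (rule law_iid[OF ne ind2]) (rule dis[OF pN])
  have law2: "distr M (PB N) X = (\<Pi>\<^sub>M k\<in>N. density lborel f)"
    unfolding X_def by (rule law_iid[OF ne ind dis])
  show ?thesis using prob_pred(1)[OF Y \<Phi>] prob_pred(1)[OF X_meas \<Phi>] law1 law2 by simp
qed

definition p where "p a S = prob {\<omega>\<in>space M. Ev N a S (X \<omega>)}"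
definition r where "r a s = prob {\<omega>\<in>space M. Rk N a s (X \<omega>)}"

lemma restr_X:
  assumes pi: "bij_betw \<pi> N N"
  shows "(\<lambda>k\<in>N. \<mu> (\<pi> k) \<omega>) = (\<lambda>k\<in>N. X \<omega> (\<pi> k))"
proof (rule restrict_ext)
  fix k assume "k \<in> N"
  then have "\<pi> k \<in> N" using bij_betw_apply[OF pi] by blast
  then show "\<mu> (\<pi> k) \<omega> = X \<omega> (\<pi> k)" by (simp add: X_app)
qed

lemma p_transfer:
  assumes pi: "bij_betw \<pi> N N" and a: "a \<in> N" and S: "S \<subseteq> N"
  shows "p (\<pi> a) (\<pi> ` S) = p a S"
proof -
  have "prob {\<omega>\<in>space M. Ev N a S (\<lambda>k\<in>N. \<mu> (\<pi> k) \<omega>)} = p a S"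
    unfolding p_def by (rule invariance[OF pi Ev_meas])
  moreover have "Ev N a S (\<lambda>k\<in>N. \<mu> (\<pi> k) \<omega>) \<longleftrightarrow> Ev N (\<pi> a) (\<pi> ` S) (X \<omega>)" for \<omega>
    unfolding restr_X[OF pi] by (rule Ev_comp[OF pi a S])
  ultimately show ?thesis unfolding p_def by simp
qed

lemma r_transfer:
  assumes pi: "bij_betw \<pi> N N" and a: "a \<in> N"
  shows "r (\<pi> a) s = r a s"
proof -
  have "prob {\<omega>\<in>space M. Rk N a s (\<lambda>k\<in>N. \<mu> (\<pi> k) \<omega>)} = r a s"
    unfolding r_def by (rule invariance[OF pi Rk_meas[OF fin]])
  moreover have "Rk N a s (\<lambda>k\<in>N. \<mu> (\<pi> k) \<omega>) \<longleftrightarrow> Rk N (\<pi> a) s (X \<omega>)" for \<omega>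
    unfolding restr_X[OF pi] by (rule Rk_comp[OF pi a])
  ultimately show ?thesis unfolding r_def by simp
qed

lemma tie:
  assumes a: "a \<in> N" and b: "b \<in> N" and ab: "a \<noteq> b"
  shows "prob {\<omega>\<in>space M. \<mu> a \<omega> = \<mu> b \<omega>} = 0"
proof -
  define g where "g = (\<lambda>c::bool. if c then a else b)"
  have "inj_on g UNIV" using ab unfolding g_def inj_on_def by auto
  moreover have "g ` UNIV \<subseteq> N" using a b unfolding g_def by auto
  ultimately have "indep_vars (\<lambda>j. borel) (\<lambda>j. \<mu> (g j)) UNIV"
    using indep_vars_reindex[OF ind] by simp
  then have iv: "indep_var borel (\<mu> a) borel (\<mu> b)"
    unfolding indep_var_def
    by (rule indep_vars_cong[THEN iffD1, rotated 3]) (auto simp: g_def split: bool.split)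
  have D: "distr M borel (\<mu> k) = density lborel f" if "k \<in> N" for k
  proof -
    have "distr M borel (\<mu> k) = distr M lborel (\<mu> k)" by (rule distr_cong) auto
    then show ?thesis using distributed_distr_eq_density[OF dis[OF that]] by simp
  qed
  have joint: "distr M (borel \<Otimes>\<^sub>M borel) (\<lambda>\<omega>. (\<mu> a \<omega>, \<mu> b \<omega>)) = density lborel f \<Otimes>\<^sub>M density lborel f"
    using iv[unfolded indep_var_distribution_eq] D[OF a] D[OF b] by simp
  let ?Dg = "{z::real\<times>real. fst z = snd z}"
  have Dg: "?Dg \<in> sets (borel \<Otimes>\<^sub>M borel)"
  proof -
    have "?Dg = {z \<in> space (borel \<Otimes>\<^sub>M borel). fst z = snd z}" by (simp add: space_pair_measure)
    also have "\<dots> \<in> sets (borel \<Otimes>\<^sub>M borel)"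
      by (rule borel_measurable_eq) measurable
    finally show ?thesis .
  qed
  have pm: "(\<lambda>\<omega>. (\<mu> a \<omega>, \<mu> b \<omega>)) \<in> measurable M (borel \<Otimes>\<^sub>M borel)"
    using meas[OF a] meas[OF b] by (rule measurable_Pair)
  have "(\<lambda>\<omega>. (\<mu> a \<omega>, \<mu> b \<omega>)) -` ?Dg \<inter> space M = {\<omega>\<in>space M. \<mu> a \<omega> = \<mu> b \<omega>}" by auto
  then have "prob {\<omega>\<in>space M. \<mu> a \<omega> = \<mu> b \<omega>} = measure (distr M (borel \<Otimes>\<^sub>M borel) (\<lambda>\<omega>. (\<mu> a \<omega>, \<mu> b \<omega>))) ?Dg"
    using measure_distr[OF pm Dg] by simp
  also have "\<dots> = measure (density lborel f \<Otimes>\<^sub>M density lborel f) ?Dg" using joint by simp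
  also have "\<dots> = 0"
  proof -
    interpret Dp: prob_space "density lborel f"
      using prob_space_distr[OF meas[OF a]] D[OF a] by simp
    have fm: "f \<in> borel_measurable lborel" using distributed_borel_measurable[OF dis[OF a]] .
    have sing: "emeasure (density lborel f) {x} = 0" for x
    proof -
      have "AE y in lborel. y \<in> {x} \<longrightarrow> f y = 0"
        using AE_lborel_singleton[of x] by (rule eventually_mono) auto
      then have "{x} \<in> null_sets (density lborel f)"
        using null_sets_density_iff[OF fm] by simp
      then show ?thesis by auto
    qed
    have "sets (density lborel f \<Otimes>\<^sub>M density lborel f) = sets (borel \<Otimes>\<^sub>M borel)"
      by (rule sets_pair_measure_cong) auto
    then have Dg': "?Dg \<in> sets (density lborel f \<Otimes>\<^sub>M density lborel f)" using Dg by simp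
    have "emeasure (density lborel f \<Otimes>\<^sub>M density lborel f) ?Dg =
        (\<integral>\<^sup>+x. emeasure (density lborel f) (Pair x -` ?Dg) \<partial>density lborel f)"
      by (rule Dp.emeasure_pair_measure_alt[OF Dg'])
    also have "\<dots> = 0" using sing by (simp add: vimage_def)
    finally show ?thesis by (simp add: measure_def)
  qed
  finally show ?thesis .
qed

lemma inj_ae: "AE \<omega> in M. Inj N (X \<omega>)"
proof -
  have "AE \<omega> in M. \<forall>c\<in>N. \<forall>d\<in>N. c \<noteq> d \<longrightarrow> \<mu> c \<omega> < \<mu> d \<omega> \<or> \<mu> d \<omega> < \<mu> c \<omega>"
  proof (rule AE_finite_allI[OF fin])
    fix c assume c: "c \<in> N"
    show "AE \<omega> in M. \<forall>d\<in>N. c \<noteq> d \<longrightarrow> \<mu> c \<omega> < \<mu> d \<omega> \<or> \<mu> d \<omega> < \<mu> c \<omega>"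
    proof (rule AE_finite_allI[OF fin])
      fix d assume d: "d \<in> N"
      show "AE \<omega> in M. c \<noteq> d \<longrightarrow> \<mu> c \<omega> < \<mu> d \<omega> \<or> \<mu> d \<omega> < \<mu> c \<omega>"
      proof (cases "c = d")
        case True then show ?thesis by simp
      next
        case False
        have ev: "{\<omega>\<in>space M. \<mu> c \<omega> = \<mu> d \<omega>} \<in> events"
          by (rule borel_measurable_eq[OF meas[OF c] meas[OF d]])
        have "emeasure M {\<omega>\<in>space M. \<mu> c \<omega> = \<mu> d \<omega>} = 0"
          using tie[OF c d False] by (simp add: emeasure_eq_measure)
        then have "AE \<omega> in M. \<mu> c \<omega> \<noteq> \<mu> d \<omega>"
          using AE_iff_measurable[OF ev, of "\<lambda>\<omega>. \<mu> c \<omega> \<noteq> \<mu> d \<omega>"] by simp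
        then show ?thesis by (rule eventually_mono) auto
      qed
    qed
  qed
  then show ?thesis by (rule eventually_mono) (simp add: Inj_def X_app)
qed

lemma prob_Inj: "prob {\<omega>\<in>space M. Inj N (X \<omega>)} = 1"
proof -
  have ev: "{\<omega>\<in>space M. Inj N (X \<omega>)} \<in> events" by (rule prob_pred(2)[OF X_meas Inj_meas])
  have "AE \<omega> in M. \<omega> \<in> {\<omega>\<in>space M. Inj N (X \<omega>)}"
    using AE_space inj_ae by eventually_elim simp
  then show ?thesis using AE_in_set_eq_1[OF ev] by simp
qed

end



context iid
begin

lemma evE: "{\<omega>\<in>space M. Ev N a S (X \<omega>)} \<in> events"
  by (rule prob_pred(2)[OF X_meas Ev_meas])

lemma evR: "{\<omega>\<in>space M. Rk N a s (X \<omega>)} \<in> events"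
  by (rule prob_pred(2)[OF X_meas Rk_meas[OF fin]])

lemma Inj_inj: "Inj N x \<longleftrightarrow> inj_on x N"
  unfolding Inj_def inj_on_iff_lt ..

lemma sum_r:
  assumes s: "s < card N"
  shows "(\<Sum>a\<in>N. r a s) = 1"
proof -
  define A where "A a = {\<omega>\<in>space M. Rk N a s (X \<omega>)}" for a
  have disj: "disjoint_family_on A N"
  unfolding disjoint_family_on_def
  proof (intro ballI impI)
    fix a b assume ab: "a \<in> N" "b \<in> N" "a \<noteq> b"
    show "A a \<inter> A b = {}"
    proof (rule ccontr)
      assume "A a \<inter> A b \<noteq> {}"
      then obtain \<omega> where w: "Rk N a s (X \<omega>)" "Rk N b s (X \<omega>)" unfolding A_def by auto
      then have inj: "inj_on (X \<omega>) N" and "rk N (X \<omega>) a = rk N (X \<omega>) b"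
        unfolding Rk_alt rk_def Inj_inj[symmetric] Inj_def by auto
      then have "a = b" using bij_betw_imp_inj_on[OF rk_bij[OF fin inj]] ab unfolding inj_on_def by blast
      then show False using ab by simp
    qed
  qed
  have U: "(\<Union>a\<in>N. A a) = {\<omega>\<in>space M. Inj N (X \<omega>)}"
  proof
    show "(\<Union>a\<in>N. A a) \<subseteq> {\<omega>\<in>space M. Inj N (X \<omega>)}"
      unfolding A_def Rk_alt Inj_def by auto
  next
    show "{\<omega>\<in>space M. Inj N (X \<omega>)} \<subseteq> (\<Union>a\<in>N. A a)"
    proof
      fix \<omega> assume w: "\<omega> \<in> {\<omega>\<in>space M. Inj N (X \<omega>)}"
      then have inj: "inj_on (X \<omega>) N" using Inj_inj by auto
      have "s \<in> rk N (X \<omega>) ` N" using rk_bij[OF fin inj] s unfolding bij_betw_def by auto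
      then obtain a where a: "a \<in> N" "rk N (X \<omega>) a = s" by auto
      then have "Rk N a s (X \<omega>)" using w unfolding Rk_alt rk_def Inj_def by auto
      then show "\<omega> \<in> (\<Union>a\<in>N. A a)" using a w unfolding A_def by auto
    qed
  qed
  have "measure M (\<Union>a\<in>N. A a) = (\<Sum>a\<in>N. measure M (A a))"
    by (rule finite_measure_finite_Union[OF fin _ disj]) (auto simp: A_def evR)
  then show ?thesis using U prob_Inj unfolding r_def A_def by simp
qed

definition Sub where "Sub a s = {S. S \<subseteq> N - {a} \<and> card S = s}"

lemma r_sum_p:
  assumes a: "a \<in> N"
  shows "r a s = (\<Sum>S\<in>Sub a s. p a S)"
proof -
  define E where "E S = {\<omega>\<in>space M. Ev N a S (X \<omega>)}" for S
  have fS: "finite (Sub a s)"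
    by (rule finite_subset[of _ "Pow N"]) (use fin in \<open>auto simp: Sub_def\<close>)
  have U: "{\<omega>\<in>space M. Rk N a s (X \<omega>)} = (\<Union>S\<in>Sub a s. E S)"
  proof
    show "{\<omega>\<in>space M. Rk N a s (X \<omega>)} \<subseteq> (\<Union>S\<in>Sub a s. E S)"
    proof
      fix \<omega> assume w: "\<omega> \<in> {\<omega>\<in>space M. Rk N a s (X \<omega>)}"
      define S where "S = {b\<in>N. X \<omega> b < X \<omega> a}"
      have "S \<in> Sub a s" using w unfolding S_def Sub_def Rk_alt by auto
      moreover have "Ev N a S (X \<omega>)" using w unfolding S_def Ev_def Rk_alt by auto
      ultimately show "\<omega> \<in> (\<Union>S\<in>Sub a s. E S)" using w unfolding E_def by auto
    qed
  next
    show "(\<Union>S\<in>Sub a s. E S) \<subseteq> {\<omega>\<in>space M. Rk N a s (X \<omega>)}"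
    proof
      fix \<omega> assume "\<omega> \<in> (\<Union>S\<in>Sub a s. E S)"
      then obtain S where S: "S \<in> Sub a s" "\<omega> \<in> space M" "Ev N a S (X \<omega>)" unfolding E_def by auto
      then have "{b\<in>N. X \<omega> b < X \<omega> a} = S" unfolding Ev_def Sub_def by auto
      then show "\<omega> \<in> {\<omega>\<in>space M. Rk N a s (X \<omega>)}" using S unfolding Rk_alt Ev_def Sub_def by auto
    qed
  qed
  have disj: "disjoint_family_on E (Sub a s)"
  unfolding disjoint_family_on_def
  proof (intro ballI impI)
    fix S T assume ST: "S \<in> Sub a s" "T \<in> Sub a s" "S \<noteq> T"
    show "E S \<inter> E T = {}"
    proof (rule ccontr)
      assume "E S \<inter> E T \<noteq> {}"
      then obtain \<omega> where "Ev N a S (X \<omega>)" "Ev N a T (X \<omega>)" unfolding E_def by auto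
      then have "S = T" using ST unfolding Ev_def Sub_def by auto
      then show False using ST by simp
    qed
  qed
  have "measure M (\<Union>S\<in>Sub a s. E S) = (\<Sum>S\<in>Sub a s. measure M (E S))"
    by (rule finite_measure_finite_Union[OF fS _ disj]) (auto simp: E_def evE)
  then show ?thesis using U unfolding r_def p_def E_def by simp
qed

lemma p_const:
  assumes a: "a \<in> N" and S: "S \<subseteq> N - {a}" and S': "S' \<subseteq> N - {a}" and c: "card S = card S'"
  shows "p a S = p a S'"
proof -
  have fS: "finite S" "finite S'" using S S' fin finite_subset by blast+
  obtain g where g: "bij_betw g S S'" using finite_same_card_bij[OF fS c] by blast
  define T where "T = N - insert a S"
  define T' where "T' = N - insert a S'"
  have "card T = card N - card (insert a S)"
    unfolding T_def by (rule card_Diff_subset) (use a S fS in auto)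
  moreover have "card T' = card N - card (insert a S')"
    unfolding T'_def by (rule card_Diff_subset) (use a S' fS in auto)
  moreover have "card (insert a S) = card (insert a S')"
  proof -
    have "a \<notin> S" "a \<notin> S'" using S S' by auto
    then show ?thesis using fS c by simp
  qed
  ultimately have cT: "card T = card T'" by simp
  have fT: "finite T" "finite T'" unfolding T_def T'_def using fin by auto
  obtain h where h: "bij_betw h T T'" using finite_same_card_bij[OF fT cT] by blast
  define \<pi> where "\<pi> c = (if c \<in> S then g c else if c \<in> T then h c else c)" for c
  have b1: "bij_betw \<pi> S S'" using g by (rule bij_betw_cong[THEN iffD1, rotated]) (simp add: \<pi>_def)
  have b2: "bij_betw \<pi> T T'" using h by (rule bij_betw_cong[THEN iffD1, rotated]) (simp add: \<pi>_def T_def)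
  have aS: "a \<notin> S" "a \<notin> S'" using S S' by auto
  have b3: "bij_betw \<pi> {a} {a}" using aS unfolding \<pi>_def T_def by (simp add: bij_betw_def)
  have "bij_betw \<pi> (T \<union> {a}) (T' \<union> {a})"
    by (rule bij_betw_combine[OF b2 b3]) (simp add: T'_def)
  then have "bij_betw \<pi> (S \<union> (T \<union> {a})) (S' \<union> (T' \<union> {a}))"
    by (rule bij_betw_combine[OF b1]) (use aS in \<open>auto simp: T'_def\<close>)
  moreover have "S \<union> (T \<union> {a}) = N" "S' \<union> (T' \<union> {a}) = N" using S S' a unfolding T_def T'_def by auto
  ultimately have pi: "bij_betw \<pi> N N" by simp
  have pa: "\<pi> a = a" using aS unfolding \<pi>_def T_def by simp
  have pS: "\<pi> ` S = S'" using b1 unfolding bij_betw_def by simp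
  have "S \<subseteq> N" using S by auto
  then have "p (\<pi> a) (\<pi> ` S) = p a S" by (rule p_transfer[OF pi a])
  then show ?thesis using pa pS by simp
qed

lemma r_const:
  assumes a: "a \<in> N" and b: "b \<in> N"
  shows "r a s = r b s"
proof -
  define \<pi> where "\<pi> c = (if c = a then b else if c = b then a else c)" for c
  have pi: "bij_betw \<pi> N N"
    by (rule bij_betw_byWitness[where f'=\<pi>]) (use a b in \<open>auto simp: \<pi>_def\<close>)
  have "\<pi> a = b" unfolding \<pi>_def by simp
  then show ?thesis using r_transfer[OF pi a, of s] by simp
qed

lemma p_val:
  assumes a: "a \<in> N" and S: "S \<subseteq> N - {a}"
  shows "p a S = 1 / (real (card N) * real ((card N - 1) choose card S))"
proof -
  define s where "s = card S"
  have cNa: "card (N - {a}) = card N - 1" using a fin by simp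
  have sl: "s \<le> card N - 1" unfolding s_def using card_mono[OF _ S] fin cNa by simp
  have cN: "card N > 0" using fin ne by (simp add: card_gt_0_iff)
  then have slt: "s < card N" using sl by simp
  have "(\<Sum>b\<in>N. r b s) = (\<Sum>b\<in>N. r a s)" using r_const[OF _ a] by simp
  then have r1: "real (card N) * r a s = 1" using sum_r[OF slt] by simp
  have "r a s = (\<Sum>S'\<in>Sub a s. p a S)"
    unfolding r_sum_p[OF a]
  proof (rule sum.cong[OF refl])
    fix S' assume "S' \<in> Sub a s"
    then have "S' \<subseteq> N - {a}" "card S = card S'" by (auto simp: Sub_def s_def)
    then show "p a S' = p a S" using p_const[OF a S] by simp
  qed
  also have "\<dots> = real (card (Sub a s)) * p a S" by simp
  finally have r2': "r a s = real (card (Sub a s)) * p a S" .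
  have "card (Sub a s) = (card N - 1) choose s"
    unfolding Sub_def using n_subsets[of "N - {a}" s] fin cNa by simp
  then have r2: "r a s = real ((card N - 1) choose s) * p a S" using r2' by simp
  have "0 < (card N - 1) choose s" using sl by simp
  then show ?thesis using r1 r2 cN unfolding s_def[symmetric]
    by (simp add: field_simps)
qed

end



lemma ev_sign:
  fixes u c :: real assumes "u \<noteq> 0"
  shows "eventually (\<lambda>t. 0 < t * u + c \<longleftrightarrow> 0 < u) at_top"
proof (cases "u > 0")
  case True
  show ?thesis unfolding eventually_at_top_linorder
  proof (intro exI allI impI)
    fix t assume t: "t \<ge> \<bar>c\<bar> / u + 1"
    have "(\<bar>c\<bar> / u + 1) * u \<le> t * u" using t True by (intro mult_right_mono) auto
    moreover have "(\<bar>c\<bar> / u + 1) * u = \<bar>c\<bar> + u" using True by (simp add: field_simps)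
    ultimately have "0 < t * u + c" using True abs_ge_minus_self[of c] by linarith
    then show "0 < t * u + c \<longleftrightarrow> 0 < u" using True by simp
  qed
next
  case False
  then have u: "u < 0" using assms by simp
  show ?thesis unfolding eventually_at_top_linorder
  proof (intro exI allI impI)
    fix t assume t: "t \<ge> \<bar>c\<bar> / (- u) + 1"
    have "t * u \<le> (\<bar>c\<bar> / (- u) + 1) * u" using t u by (intro mult_right_mono_neg) auto
    moreover have "(\<bar>c\<bar> / (- u) + 1) * u = - \<bar>c\<bar> + u" using u by (simp add: field_simps)
    ultimately have "t * u + c < 0" using u abs_ge_self[of c] by linarith
    then show "0 < t * u + c \<longleftrightarrow> 0 < u" using u by simp
  qed
qed

lemma ev_order:
  fixes x e :: "nat \<Rightarrow> real"
  assumes fN: "finite N" and inj: "Inj N x"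
  shows "eventually (\<lambda>t. \<forall>a\<in>N. \<forall>b\<in>N. (t * x a + e a < t * x b + e b \<longleftrightarrow> x a < x b)) at_top"
proof (rule eventually_ball_finite[OF fN], rule ballI, rule eventually_ball_finite[OF fN], rule ballI)
  fix a b assume a: "a \<in> N" and b: "b \<in> N"
  show "eventually (\<lambda>t. t * x a + e a < t * x b + e b \<longleftrightarrow> x a < x b) at_top"
  proof (cases "a = b")
    case True then show ?thesis by simp
  next
    case False
    then have "x a < x b \<or> x b < x a" using inj a b unfolding Inj_def by blast
    then have "x b - x a \<noteq> 0" by auto
    then have "eventually (\<lambda>t. 0 < t * (x b - x a) + (e b - e a) \<longleftrightarrow> 0 < x b - x a) at_top"
      by (rule ev_sign)
    then show ?thesis
    proof (rule eventually_mono)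
      fix t assume h: "0 < t * (x b - x a) + (e b - e a) \<longleftrightarrow> 0 < x b - x a"
      have 1: "t * x a + e a < t * x b + e b \<longleftrightarrow> 0 < t * (x b - x a) + (e b - e a)"
        by (simp add: algebra_simps)
      have 2: "x a < x b \<longleftrightarrow> 0 < x b - x a" by simp
      show "t * x a + e a < t * x b + e b \<longleftrightarrow> x a < x b" using h 1 2 by blast
    qed
  qed
qed

definition Phi :: "nat \<Rightarrow> real \<Rightarrow> (nat \<Rightarrow> real) \<Rightarrow> nat \<Rightarrow> (nat \<Rightarrow> real) \<Rightarrow> bool" where
  "Phi m q w i x \<longleftrightarrow> Inj {1..m} x \<and> i \<in> {1..m} \<and>
     (\<Sum>b\<in>{1..m}. if x b < x i then w b else 0) \<le> quota m q w \<and>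
     quota m q w < (\<Sum>b\<in>{1..m}. if x b < x i then w b else 0) + w i"

lemma Inj_inj': "Inj N x \<longleftrightarrow> inj_on x N"
  unfolding Inj_def inj_on_iff_lt ..

lemma pivotal_Phi:
  assumes wpos: "\<And>k. k \<in> {1..m} \<Longrightarrow> 0 \<le> w k" and Q0: "0 \<le> quota m q w"
    and Q1: "quota m q w < sum w {1..m}"
  shows "pivotal m q w x i \<longleftrightarrow> Phi m q w i x"
proof -
  have sf: "sum w {b\<in>{1..m}. x b < x i} = (\<Sum>b\<in>{1..m}. if x b < x i then w b else 0)"
    by (rule sum.inter_filter[OF finite_atLeastAtMost])
  have "pivotal m q w x i \<longleftrightarrow> inj_on x {1..m} \<and> i \<in> {1..m} \<and>
     sum w {b\<in>{1..m}. x b < x i} \<le> quota m q w \<and> quota m q w < sum w {b\<in>{1..m}. x b < x i} + w i"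
    by (rule pivotal_char[OF wpos Q0 Q1])
  then show ?thesis unfolding Phi_def Inj_inj' sf .
qed

lemma pivotal_restrict: "pivotal m q w x i \<longleftrightarrow> pivotal m q w (\<lambda>k\<in>{1..m}. x k) i"
  by (rule pivotal_cong) simp

lemma Phi_Ev:
  assumes a: "a \<in> {1..m}"
  shows "Phi m q w a x \<longleftrightarrow> (\<exists>S\<in>{S\<in>Pow ({1..m} - {a}). sum w S \<le> quota m q w \<and> quota m q w < sum w S + w a}.
     Ev {1..m} a S x)"
proof -
  have sf: "(\<Sum>b\<in>{1..m}. if x b < x a then w b else 0) = sum w {b\<in>{1..m}. x b < x a}"
    by (rule sum.inter_filter[OF finite_atLeastAtMost, symmetric])
  show ?thesis
  proof
    assume h: "Phi m q w a x"
    define S where "S = {b\<in>{1..m}. x b < x a}"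
    have "S \<in> Pow ({1..m} - {a})" unfolding S_def by auto
    moreover have "sum w S \<le> quota m q w \<and> quota m q w < sum w S + w a"
      using h sf unfolding Phi_def S_def by simp
    moreover have "Ev {1..m} a S x" using h unfolding Phi_def Inj_def Ev_def S_def by auto
    ultimately show "\<exists>S\<in>{S\<in>Pow ({1..m} - {a}). sum w S \<le> quota m q w \<and> quota m q w < sum w S + w a}.
     Ev {1..m} a S x" by blast
  next
    assume "\<exists>S\<in>{S\<in>Pow ({1..m} - {a}). sum w S \<le> quota m q w \<and> quota m q w < sum w S + w a}.
     Ev {1..m} a S x"
    then obtain S where S: "S \<subseteq> {1..m} - {a}" "sum w S \<le> quota m q w" "quota m q w < sum w S + w a"
      "Ev {1..m} a S x" by blast
    then have "{b\<in>{1..m}. x b < x a} = S" unfolding Ev_def by auto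
    then show "Phi m q w a x" using S a sf unfolding Phi_def Ev_def Inj_def by simp
  qed
qed

lemma Phi_meas: "Measurable.pred (PB {1..m}) (Phi m q w a)"
proof (cases "a \<in> {1..m}")
  case False
  then have "Phi m q w a = (\<lambda>x. False)" unfolding Phi_def by auto
  then show ?thesis by simp
next
  case True
  let ?G = "{S\<in>Pow ({1..m} - {a}). sum w S \<le> quota m q w \<and> quota m q w < sum w S + w a}"
  have "{x\<in>space (PB {1..m}). Phi m q w a x} = (\<Union>S\<in>?G. {x\<in>space (PB {1..m}). Ev {1..m} a S x})"
    using Phi_Ev[OF True] by auto
  moreover have "(\<Union>S\<in>?G. {x\<in>space (PB {1..m}). Ev {1..m} a S x}) \<in> sets (PB {1..m})"
  proof (rule sets.finite_UN)
    show "finite ?G" by simp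
    show "{x\<in>space (PB {1..m}). Ev {1..m} a S x} \<in> sets (PB {1..m})" for S
      using Ev_meas[of "{1..m}" a S] unfolding pred_def by simp
  qed
  ultimately show ?thesis unfolding pred_def by simp
qed



lemma coef_eq:
  assumes m: "1 \<le> m" and k: "k \<le> m - 1"
  shows "fact k * fact (m - k - 1) / fact m = 1 / (real m * real ((m - 1) choose k))"
proof -
  have b: "real ((m - 1) choose k) = fact (m - 1) / (fact k * fact (m - 1 - k))"
    by (rule binomial_fact[OF k])
  have fm: "(fact m :: real) = real m * fact (m - 1)" using m by (simp add: fact_reduce)
  have e: "m - k - 1 = m - 1 - k" by simp
  show ?thesis unfolding b fm e by (simp add: field_simps)
qed

theorem theorem2:
  fixes M :: "'a measure" and m :: nat and q :: real and w :: "nat \<Rightarrow> real"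
    and \<mu> \<epsilon> :: "nat \<Rightarrow> 'a \<Rightarrow> real" and f :: "real \<Rightarrow> ennreal" and i j :: nat
  assumes "prob_space M"
    and "1/2 \<le> q" and "q < 1"
    and "\<And>k. k \<in> {1..m} \<Longrightarrow> w k \<ge> 0" and "(\<Sum>k=1..m. w k) > 0"
    and "prob_space.indep_vars M (\<lambda>_. borel) (case_sum \<mu> \<epsilon>) ({1..m} <+> {1..m})"
    and "\<And>k. k \<in> {1..m} \<Longrightarrow> integrable M (\<epsilon> k)"
    and "\<And>k. k \<in> {1..m} \<Longrightarrow> integrable M (\<lambda>\<omega>. (\<epsilon> k \<omega>)\<^sup>2)"
    and "\<And>k. k \<in> {1..m} \<Longrightarrow> distributed M lborel (\<mu> k) f"
    and "\<exists>B. \<forall>x. f x \<le> ennreal B"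
    and "i \<in> {1..m}" and "j \<in> {1..m}"
    and "shapley m (wvg m q w) j > 0"
  shows "((\<lambda>t. pivot_prob M m q w \<mu> \<epsilon> t i / pivot_prob M m q w \<mu> \<epsilon> t j)
           \<longlongrightarrow> shapley m (wvg m q w) i / shapley m (wvg m q w) j) at_top"
proof -
  interpret prob_space M by fact
  let ?N = "{1..m::nat}"
  have wpos: "\<And>k. k \<in> ?N \<Longrightarrow> 0 \<le> w k" using assms(4) by simp
  have Wpos: "sum w ?N > 0" using assms(5) by simp
  have Q0: "0 \<le> quota m q w" unfolding quota_def using assms(2) Wpos by simp
  have Q1: "quota m q w < sum w ?N" unfolding quota_def using assms(3) Wpos by simp
  have ind0: "indep_vars (\<lambda>_. borel) (case_sum \<mu> \<epsilon>) (?N <+> ?N)" using assms(6) .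
  have sub: "Inl ` ?N \<subseteq> ?N <+> ?N" by auto
  have "indep_vars (\<lambda>_. borel) (\<lambda>k. case_sum \<mu> \<epsilon> (Inl k)) ?N"
    using indep_vars_reindex[OF ind0 _ sub] by (simp add: inj_on_def)
  then have indmu: "indep_vars (\<lambda>_. borel) \<mu> ?N" by simp
  have meps: "\<epsilon> k \<in> borel_measurable M" if "k \<in> ?N" for k
  proof -
    have "Inr k \<in> ?N <+> ?N" using that by auto
    then have "random_variable borel (case_sum \<mu> \<epsilon> (Inr k))" using ind0 unfolding indep_vars_def2 by blast
    then show ?thesis by simp
  qed
  have mN: "1 \<le> m" using assms(11) by simp
  have "iid M ?N \<mu> f"
    unfolding iid_def iid_axioms_def using assms(1) indmu assms(9) mN by auto
  then interpret I: iid M ?N \<mu> f .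
  define Z where "Z t = (\<lambda>\<omega>. \<lambda>k\<in>?N. t * \<mu> k \<omega> + \<epsilon> k \<omega>)" for t
  have Zm: "Z t \<in> measurable M (PB ?N)" for t
    unfolding Z_def
  proof (rule measurable_restrict)
    fix k assume k: "k \<in> ?N"
    note [measurable] = I.meas[OF k] meps[OF k]
    show "(\<lambda>\<omega>. t * \<mu> k \<omega> + \<epsilon> k \<omega>) \<in> borel_measurable M" by measurable
  qed
  have piv_Z: "pivotal m q w (\<lambda>k. t * \<mu> k \<omega> + \<epsilon> k \<omega>) a \<longleftrightarrow> Phi m q w a (Z t \<omega>)" for t \<omega> a
    unfolding Z_def pivotal_restrict[of m q w "\<lambda>k. t * \<mu> k \<omega> + \<epsilon> k \<omega>"]
    by (rule pivotal_Phi[OF wpos Q0 Q1])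
  have piv_X: "pivotal m q w (\<lambda>k. \<mu> k \<omega>) a \<longleftrightarrow> Phi m q w a (I.X \<omega>)" for \<omega> a
    unfolding I.X_def pivotal_restrict[of m q w "\<lambda>k. \<mu> k \<omega>"]
    by (rule pivotal_Phi[OF wpos Q0 Q1])
  have lim: "((\<lambda>t. pivot_prob M m q w \<mu> \<epsilon> t a) \<longlongrightarrow> prob {\<omega>\<in>space M. Phi m q w a (I.X \<omega>)}) at_top" for a
  proof -
    define A where "A t = {\<omega>\<in>space M. Phi m q w a (Z t \<omega>)}" for t
    define B where "B = {\<omega>\<in>space M. Phi m q w a (I.X \<omega>)}"
    have Aev: "A t \<in> events" for t unfolding A_def by (rule I.prob_pred(2)[OF Zm Phi_meas])
    have Bev: "B \<in> events" unfolding B_def by (rule I.prob_pred(2)[OF I.X_meas Phi_meas])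
    have eq: "pivot_prob M m q w \<mu> \<epsilon> t a = measure M (A t)" for t
      unfolding pivot_prob_def A_def using piv_Z by simp
    have "((\<lambda>t. integral\<^sup>L M (indicator (A t) :: 'a \<Rightarrow> real)) \<longlongrightarrow> integral\<^sup>L M (indicator B)) at_top"
    proof (rule integral_dominated_convergence_at_top[where w="\<lambda>_. 1"])
      show "(indicator B :: 'a \<Rightarrow> real) \<in> borel_measurable M" using Bev by simp
      show "(indicator (A t) :: 'a \<Rightarrow> real) \<in> borel_measurable M" for t using Aev by simp
      show "integrable M (\<lambda>_. 1::real)" by simp
      show "\<forall>\<^sub>F t in at_top. AE x in M. norm (indicator (A t) x :: real) \<le> 1"
        by (intro always_eventually allI AE_I2) (simp add: indicator_def)
      show "AE x in M. ((\<lambda>t. indicator (A t) x :: real) \<longlongrightarrow> indicator B x) at_top"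
        using I.inj_ae
      proof (rule eventually_mono)
        fix \<omega> assume inj: "Inj ?N (I.X \<omega>)"
        have "Inj ?N (\<lambda>k. \<mu> k \<omega>)" unfolding Inj_def
        proof (intro ballI impI)
          fix c d assume cd: "c \<in> ?N" "d \<in> ?N" "c \<noteq> d"
          then have "I.X \<omega> c < I.X \<omega> d \<or> I.X \<omega> d < I.X \<omega> c" using inj unfolding Inj_def by blast
          then show "\<mu> c \<omega> < \<mu> d \<omega> \<or> \<mu> d \<omega> < \<mu> c \<omega>" using I.X_app[OF cd(1)] I.X_app[OF cd(2)] by simp
        qed
        then have "eventually (\<lambda>t. \<forall>c\<in>?N. \<forall>d\<in>?N. (t * \<mu> c \<omega> + \<epsilon> c \<omega> < t * \<mu> d \<omega> + \<epsilon> d \<omega> \<longleftrightarrow> \<mu> c \<omega> < \<mu> d \<omega>)) at_top"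
          by (rule ev_order[OF finite_atLeastAtMost])
        then have "eventually (\<lambda>t. indicator (A t) \<omega> = (indicator B \<omega>::real)) at_top"
        proof (rule eventually_mono)
          fix t assume h: "\<forall>c\<in>?N. \<forall>d\<in>?N. (t * \<mu> c \<omega> + \<epsilon> c \<omega> < t * \<mu> d \<omega> + \<epsilon> d \<omega> \<longleftrightarrow> \<mu> c \<omega> < \<mu> d \<omega>)"
          have "pivotal m q w (\<lambda>k. t * \<mu> k \<omega> + \<epsilon> k \<omega>) a \<longleftrightarrow> pivotal m q w (\<lambda>k. \<mu> k \<omega>) a"
            by (rule pivotal_cong) (use h in simp)
          then have "Phi m q w a (Z t \<omega>) \<longleftrightarrow> Phi m q w a (I.X \<omega>)" using piv_Z piv_X by simp
          then show "indicator (A t) \<omega> = (indicator B \<omega>::real)" unfolding A_def B_def indicator_def by simp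
        qed
        then show "((\<lambda>t. indicator (A t) \<omega> :: real) \<longlongrightarrow> indicator B \<omega>) at_top" by (rule tendsto_eventually)
      qed
    qed
    moreover have "A t \<inter> space M = A t" for t unfolding A_def by auto
    moreover have "B \<inter> space M = B" unfolding B_def by auto
    ultimately show ?thesis using eq unfolding B_def[symmetric] by simp
  qed
  have Lval: "prob {\<omega>\<in>space M. Phi m q w a (I.X \<omega>)} = shapley m (wvg m q w) a" if a: "a \<in> ?N" for a
  proof -
    define G where "G = {S\<in>Pow (?N - {a}). sum w S \<le> quota m q w \<and> quota m q w < sum w S + w a}"
    define E where "E S = {\<omega>\<in>space M. Ev ?N a S (I.X \<omega>)}" for S
    have fG: "finite G" unfolding G_def by simp
    have U: "{\<omega>\<in>space M. Phi m q w a (I.X \<omega>)} = (\<Union>S\<in>G. E S)"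
      using Phi_Ev[OF a] unfolding G_def E_def by auto
    have disj: "disjoint_family_on E G"
      unfolding disjoint_family_on_def
    proof (intro ballI impI)
      fix S T assume ST: "S \<in> G" "T \<in> G" "S \<noteq> T"
      show "E S \<inter> E T = {}"
      proof (rule ccontr)
        assume "E S \<inter> E T \<noteq> {}"
        then obtain \<omega> where "Ev ?N a S (I.X \<omega>)" "Ev ?N a T (I.X \<omega>)" unfolding E_def by auto
        then have "S = T" using ST unfolding Ev_def G_def by auto
        then show False using ST by simp
      qed
    qed
    have "measure M (\<Union>S\<in>G. E S) = (\<Sum>S\<in>G. measure M (E S))"
      by (rule finite_measure_finite_Union[OF fG _ disj], rule image_subsetI, unfold E_def, rule I.evE)
    then have P1: "prob {\<omega>\<in>space M. Phi m q w a (I.X \<omega>)} = (\<Sum>S\<in>G. I.p a S)"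
      using U unfolding I.p_def E_def by simp
    also have "\<dots> = (\<Sum>S\<in>G. 1 / (real m * real ((m - 1) choose card S)))"
    proof (rule sum.cong[OF refl])
      fix S assume "S \<in> G"
      then have "S \<subseteq> ?N - {a}" unfolding G_def by auto
      then show "I.p a S = 1 / (real m * real ((m - 1) choose card S))" using I.p_val[OF a] by simp
    qed
    also have "\<dots> = shapley m (wvg m q w) a"
    proof -
      have trm: "fact (card S) * fact (m - card S - 1) / fact m * (wvg m q w (S \<union> {a}) - wvg m q w S) =
        (if sum w S \<le> quota m q w \<and> quota m q w < sum w S + w a then 1 / (real m * real ((m - 1) choose card S)) else 0)"
        if S: "S \<in> Pow (?N - {a})" for S
      proof -
        have fS: "finite S" using S finite_subset[of S ?N] by auto
        have aS: "a \<notin> S" using S by auto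
        have "card S \<le> card (?N - {a})" using S by (intro card_mono) auto
        then have k: "card S \<le> m - 1" using a by simp
        have sS: "sum w (S \<union> {a}) = sum w S + w a" using fS aS by simp
        have wa: "0 \<le> w a" using wpos a by simp
        have "wvg m q w (S \<union> {a}) - wvg m q w S = (if sum w S \<le> quota m q w \<and> quota m q w < sum w S + w a then 1 else 0)"
          unfolding wvg_def sS using wa by auto
        then show ?thesis using coef_eq[OF mN k] by simp
      qed
      have "shapley m (wvg m q w) a = (\<Sum>S\<in>Pow (?N - {a}).
          (if sum w S \<le> quota m q w \<and> quota m q w < sum w S + w a then 1 / (real m * real ((m - 1) choose card S)) else 0))"
        unfolding shapley_def by (rule sum.cong[OF refl]) (rule trm)
      also have "\<dots> = (\<Sum>S\<in>G. 1 / (real m * real ((m - 1) choose card S)))"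
        unfolding G_def by (rule sum.inter_filter[symmetric]) simp
      finally show ?thesis by simp
    qed
    finally show ?thesis .
  qed
  have li: "((\<lambda>t. pivot_prob M m q w \<mu> \<epsilon> t i) \<longlongrightarrow> shapley m (wvg m q w) i) at_top"
    using lim[of i] Lval[OF assms(11)] by simp
  have lj: "((\<lambda>t. pivot_prob M m q w \<mu> \<epsilon> t j) \<longlongrightarrow> shapley m (wvg m q w) j) at_top"
    using lim[of j] Lval[OF assms(12)] by simp
  show ?thesis using tendsto_divide[OF li lj] assms(13) by simp
qed


end
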